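(* Let $m\in[1/2,1)$ and let $g_s:\mathbb{T}\to\mathbb{T}$ be as in the context. Then for every $s\in J_\Gamma:=\left[\frac{1}{-2+1/(m-m^2)},\,\frac12\right]$, the map $g_s$ has a fixed point.
   Context: Let $\mathbb{T}=\mathbb{R}/\mathbb{Z}\cong[0,1)$, $m\in[1/2,1)$ and $\Lambda=m/(1-m)$. Define $h:\mathbb{T}\to\mathbb{T}$ by $h(y)=1-m+\Lambda y$ for $y\in[0,1-m]$ and $h(y)=\Lambda^{-1}(y-(1-m))$ for $y\in[1-m,1)$, and for $s\in\mathbb{R}$ let $g_s(x)=h(x+s \bmod 1)$. Equivalently, $g_s$ is the first-return map to the bottom side of the unit square of the upward linear flow in direction $(s,1)$ on the dilation surface obtained from the unit square by identifying its vertical sides by translation, gluing the top segment $[0,1-m]\times\{1\}$ to the bottom segment $[1-m,1]\times\{0\}$ via $(y,1)\mapsto(1-m+\Lambda y,0)$, and gluing $[1-m,1]\times\{1\}$ to $[0,1-m]\times\{0\}$ via $(y,1)\mapsto(\Lambda^{-1}(y-1+m),0)$. *)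

theory Defs
  imports Complex_Main
begin

text \<open>The circle T = R/Z is represented by its fundamental domain [0,1); reduction mod 1 is frac.\<close>

definition Lam :: "real \<Rightarrow> real" where
  "Lam m = m / (1 - m)"

text \<open>h on [0,1). At y = 1-m both branches agree mod 1 (value 1 = 0), we use the representative 0.\<close>
definition hmap :: "real \<Rightarrow> real \<Rightarrow> real" where
  "hmap m y = (if y < 1 - m then 1 - m + Lam m * y else (y - (1 - m)) / Lam m)"

definition gmap :: "real \<Rightarrow> real \<Rightarrow> real \<Rightarrow> real" where
  "gmap m s x = hmap m (frac (x + s))"

end

theory Submission
  imports Defs
begin

lemma aux: "(d::real) \<noteq> 0 \<Longrightarrow> -2 + 1 / d = (-2*d + 1) / d"
  by (simp add: diff_divide_distrib)

lemma lowbound: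
  fixes m s :: real
  assumes "1/2 \<le> m" and "m < 1"
    and "1 / (-2 + 1 / (m - m^2)) \<le> s"
  shows "1 - m \<le> s"
proof -
  have p: "m - m^2 > 0" using assms by (simp add: power2_eq_square)
  have e: "-2 + 1 / (m - m^2) = (m^2 + (1-m)^2) / (m - m^2)"
  proof -
    have nz: "m - m^2 \<noteq> 0" using p by simp
    have eq2: "-2*(m - m^2) + 1 = m^2 + (1-m)^2" by algebra
    show ?thesis using aux[OF nz] eq2 by metis
  qed
  have q: "m^2 + (1-m)^2 > 0" using assms by (intro add_pos_nonneg) auto
  have "1 / (-2 + 1 / (m - m^2)) = (m - m^2) / (m^2 + (1-m)^2)"
    using e p q by simp
  hence "(m - m^2) / (m^2 + (1-m)^2) \<le> s" using assms by simp
  hence "m - m^2 \<le> s * (m^2 + (1-m)^2)" using q by (simp add: divide_le_eq)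
  moreover have "(1-m) * (m^2 + (1-m)^2) \<le> m - m^2"
  proof -
    have "m - m^2 - (1-m) * (m^2 + (1-m)^2) = (1-m) * ((2*m-1)*(1-m))"
      by (simp add: algebra_simps power2_eq_square)
    moreover have "(1-m) * ((2*m-1)*(1-m)) \<ge> 0" using assms by simp
    ultimately show ?thesis by linarith
  qed
  ultimately have "(1-m) * (m^2 + (1-m)^2) \<le> s * (m^2 + (1-m)^2)" by linarith
  thus ?thesis using q by simp
qed

theorem lemmaA2:
  fixes m s :: real
  assumes "1/2 \<le> m" and "m < 1"
    and "1 / (-2 + 1 / (m - m^2)) \<le> s" and "s \<le> 1/2"
  shows "\<exists>x\<in>{0..<1}. gmap m s x = x"
proof -
  have s1: "1 - m \<le> s" using lowbound assms by blast
  show ?thesis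
  proof (cases "m = 1/2")
    case True
    hence "s = 1/2" using s1 assms by simp
    have f: "frac (1/2::real) = 1/2" by (simp add: frac_eq)
    have "gmap m s 0 = 0" using True \<open>s = 1/2\<close> f by (simp add: gmap_def hmap_def Lam_def)
    thus ?thesis by auto
  next
    case False
    hence m2: "2*m - 1 > 0" using assms by simp
    define x where "x = (s-1+m)*(1-m)/(2*m-1)"
    have x0: "x \<ge> 0" unfolding x_def using m2 s1 assms by simp
    have "(s-1+m)*(1-m) \<le> (m - 1/2)*(1-m)" using assms by (simp add: mult_right_mono)
    also have "\<dots> < (m-1/2)" using assms m2 by simp
    also have "\<dots> \<le> (1-s)*(2*m-1)" using assms m2
    proof -
      have "(1-s)*(2*m-1) \<ge> (1/2)*(2*m-1)" using assms m2 by (intro mult_right_mono) auto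
      thus ?thesis by simp
    qed
    finally have "(s-1+m)*(1-m) < (1-s)*(2*m-1)" .
    hence "x < 1 - s" unfolding x_def using m2 by (simp only: pos_divide_less_eq)
    hence xs: "x + s < 1" by linarith
    have fr: "frac (x + s) = x + s" using x0 xs s1 assms by (simp add: frac_eq)
    have L: "Lam m = m/(1-m)" by (simp add: Lam_def)
    have "gmap m s x = (x + s - (1-m)) / (m/(1-m))"
      unfolding gmap_def hmap_def fr L using x0 s1 by simp
    also have "\<dots> = x"
    proof -
      have "x * (2*m-1) = (s-1+m)*(1-m)" unfolding x_def using m2 by simp
      hence "(x + s - (1-m)) * (1-m) = x * m" by (simp add: algebra_simps)
      thus ?thesis using assms by (simp add: field_simps)
    qed
    finally show ?thesis using x0 xs s1 assms by auto
  qed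
qed

end
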